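(* Let $m\le n$, let $\mathbf A\in\mathbb R^{m\times n}$ have columns in general position, i.e., any $m$ columns of $\mathbf A$ span $\mathbb R^m$, and let $\mathbf b\in\mathbb R^m$. Then every minimizer $\mathbf z^\star\in\arg\min_{\mathbf z\in\mathbb R^n}\|\mathbf z\|_\infty$ subject to $\mathbf A\mathbf z=\mathbf b$ satisfies $$\#\{i\in[n]:|z^\star_i|=\|\mathbf z^\star\|_\infty\}\ge n-m+1.$$ *)

theory Defs
  imports "HOL-Analysis.Analysis"
begin

end

theory Submission
  imports Defs
begin

lemma infnorm_attained_cart: "\<exists>i. \<bar>(x::real^'n) $ i\<bar> = infnorm x"
proof -
  have e: "{\<bar>x$i\<bar> |i. i\<in>UNIV} = range (\<lambda>i. \<bar>x$i\<bar>)" by auto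
  have "Sup (range (\<lambda>i. \<bar>x$i\<bar>)) \<in> range (\<lambda>i. \<bar>x$i\<bar>)"
    by (subst cSup_eq_Max) (auto intro!: Max_in)
  then show ?thesis unfolding infnorm_cart e by auto
qed

lemma infnorm_lt_cart:
  assumes "\<And>i. \<bar>(x::real^'n) $ i\<bar> < t" shows "infnorm x < t"
  using infnorm_attained_cart[of x] assms by metis

theorem lemmaA2:
  fixes A :: "real ^ 'n ^ 'm" and b :: "real ^ 'm" and zs :: "real ^ 'n"
  assumes mn: "CARD('m) \<le> CARD('n)"
    and gen_pos: "\<And>S :: 'n set. card S = CARD('m) \<Longrightarrow> span ((\<lambda>j. column j A) ` S) = UNIV"
    and feas: "A *v zs = b"
    and opt: "\<And>z. A *v z = b \<Longrightarrow> infnorm zs \<le> infnorm z"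
  shows "card {i. \<bar>zs $ i\<bar> = infnorm zs} \<ge> CARD('n) - CARD('m) + 1"
proof (rule ccontr)
  define t where "t = infnorm zs"
  define T where "T = {i. \<bar>zs $ i\<bar> = t}"
  define N where "N = {i. \<bar>zs $ i\<bar> \<noteq> t}"
  define col where "col = (\<lambda>j. column j A)"
  assume "\<not> ?thesis"
  hence cT: "card T \<le> CARD('n) - CARD('m)" unfolding T_def t_def by simp
  have "card T + card N = CARD('n)"
  proof -
    have "T \<union> N = UNIV" "T \<inter> N = {}" unfolding T_def N_def by auto
    thus ?thesis by (metis card_Un_disjoint finite)
  qed
  hence "CARD('m) \<le> card N" using cT mn by linarith
  then obtain S where S: "S \<subseteq> N" "card S = CARD('m)" "finite S"
    by (rule obtain_subset_with_card_n)
  have tpos: "t > 0"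
  proof (rule ccontr)
    assume "\<not> t > 0"
    hence "t = 0" unfolding t_def using infnorm_pos_le[of zs] by linarith
    hence "T = UNIV" unfolding T_def t_def using component_le_infnorm_cart[of zs] by force
    moreover have "CARD('m) > 0" "CARD('n) > 0" by simp_all
    moreover have "card T = CARD('n)" using \<open>T = UNIV\<close> by simp
    ultimately show False using cT by linarith
  qed
  define sT :: "real^'n" where "sT = (\<chi> i. if i \<in> T then sgn (zs $ i) else 0)"
  define c where "c = A *v sT"
  have "c \<in> span (col ` S)" using gen_pos[OF S(2)] unfolding col_def by simp
  then obtain u where u: "c = (\<Sum>v\<in>col ` S. u v *\<^sub>R v)"
    using span_finite[of "col ` S"] S(3) by auto
  define B where "B = inv_into S col ` col ` S"
  have BS: "B \<subseteq> S" unfolding B_def by (auto intro: inv_into_into)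
  have colB: "col ` B = col ` S" unfolding B_def
    by (auto simp: image_image f_inv_into_f[OF imageI] image_iff)
  have injB: "inj_on col B" unfolding B_def
    by (rule inj_onI) (auto simp: f_inv_into_f[OF imageI])
  have finB: "finite B" using BS S(3) finite_subset by blast
  have c2: "c = (\<Sum>j\<in>B. u (col j) *\<^sub>R col j)"
    using u colB sum.reindex[OF injB, of "\<lambda>v. u v *\<^sub>R v"] by simp
  define w :: "real^'n" where "w = (\<chi> j. if j \<in> B then u (col j) else 0)"
  have Aw: "A *v w = c"
  proof -
    have "A *v w = (\<Sum>j\<in>UNIV. (w $ j) *s col j)" unfolding matrix_mult_sum col_def by simp
    also have "\<dots> = (\<Sum>j\<in>B. (w $ j) *s col j)"
      by (rule sum.mono_neutral_right) (auto simp: w_def)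
    also have "\<dots> = c" unfolding c2 w_def
      by (simp add: scalar_mult_eq_scaleR)
    finally show ?thesis .
  qed
  have wT: "\<And>i. i \<in> T \<Longrightarrow> w $ i = 0"
    using BS S(1) unfolding w_def T_def N_def by auto
  define \<mu> where "\<mu> = Max (insert 0 ((\<lambda>i. \<bar>zs $ i\<bar>) ` N))"
  have muN: "\<And>i. i \<in> N \<Longrightarrow> \<bar>zs $ i\<bar> \<le> \<mu>" unfolding \<mu>_def by (simp)
  have mult: "\<mu> < t"
  proof -
    have "\<mu> \<in> insert 0 ((\<lambda>i. \<bar>zs $ i\<bar>) ` N)" unfolding \<mu>_def by (intro Max_in) auto
    moreover have "\<And>i. i \<in> N \<Longrightarrow> \<bar>zs $ i\<bar> < t"
      using component_le_infnorm_cart[of zs] unfolding N_def t_def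
      by (simp add: order_le_neq_trans)
    ultimately show ?thesis using tpos by auto
  qed
  define \<delta> where "\<delta> = t - \<mu>"
  define \<epsilon> where "\<epsilon> = min t \<delta> / (2 * (1 + infnorm w))"
  have iw: "infnorm w \<ge> 0" by (rule infnorm_pos_le)
  have epos: "\<epsilon> > 0" unfolding \<epsilon>_def \<delta>_def using tpos mult iw by simp
  have elt: "\<epsilon> < t" and ew: "\<epsilon> * infnorm w < \<delta>"
  proof -
    have d: "2 * (1 + infnorm w) > 0" using iw by simp
    have m: "min t \<delta> > 0" unfolding \<delta>_def using tpos mult by simp
    have "\<epsilon> * (2 * (1 + infnorm w)) = min t \<delta>" unfolding \<epsilon>_def using d by simp
    hence E: "2 * \<epsilon> + 2 * (\<epsilon> * infnorm w) = min t \<delta>" by (simp add: algebra_simps)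
    have p: "\<epsilon> * infnorm w \<ge> 0" using epos iw by simp
    have "min t \<delta> \<le> t" "min t \<delta> \<le> \<delta>" by simp_all
    thus "\<epsilon> < t" "\<epsilon> * infnorm w < \<delta>" using E p epos by linarith+
  qed
  define z' where "z' = zs - \<epsilon> *\<^sub>R sT + \<epsilon> *\<^sub>R w"
  have Az': "A *v z' = b" unfolding z'_def
    by (simp add: matrix_vector_right_distrib matrix_vector_mult_diff_distrib matrix_vector_mult_scaleR
        feas c_def[symmetric] Aw)
  have "infnorm z' < t"
  proof (rule infnorm_lt_cart)
    fix i
    show "\<bar>z' $ i\<bar> < t"
    proof (cases "i \<in> T")
      case True
      hence "z' $ i = zs $ i - \<epsilon> * sgn (zs $ i)" and a: "\<bar>zs $ i\<bar> = t"
        using wT[OF True] unfolding z'_def sT_def T_def by auto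
      thus ?thesis using tpos epos elt
        by (cases "zs $ i > 0") (auto simp: sgn_if abs_if split: if_splits)
    next
      case False
      hence iN: "i \<in> N" unfolding T_def N_def by auto
      have z'i: "z' $ i = zs $ i + \<epsilon> * w $ i" using False unfolding z'_def sT_def by simp
      have wi: "\<bar>w $ i\<bar> \<le> infnorm w" by (rule component_le_infnorm_cart)
      have "\<bar>z' $ i\<bar> \<le> \<bar>zs $ i\<bar> + \<epsilon> * infnorm w"
      proof -
        have "\<bar>zs $ i + \<epsilon> * w $ i\<bar> \<le> \<bar>zs $ i\<bar> + \<bar>\<epsilon> * w $ i\<bar>" by (rule abs_triangle_ineq)
        moreover have "\<bar>\<epsilon> * w $ i\<bar> = \<epsilon> * \<bar>w $ i\<bar>" using epos by (simp add: abs_mult)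
        moreover have "\<epsilon> * \<bar>w $ i\<bar> \<le> \<epsilon> * infnorm w"
          using epos \<open>\<bar>w $ i\<bar> \<le> infnorm w\<close> by (simp add: mult_left_mono)
        ultimately show ?thesis using \<open>z' $ i = zs $ i + \<epsilon> * w $ i\<close> by linarith
      qed
      thus ?thesis using muN[OF iN] ew unfolding \<delta>_def by linarith
    qed
  qed
  thus False using opt[OF Az'] unfolding t_def by linarith
qed

end
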